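(* Let $\mathcal{P}$ be a poset (not necessarily finite) of composition length at least $2$ whose Hasse diagram is a rooted tree with root $r$, and let $M$ be a $k\mathcal{P}$-module such that $\partial_0^*M\cong\partial_1^*M$ as $k\mathcal{G}^{\mathcal{P}}_1$-modules. Then: (1) for any $a\ne r$ and any $x,y>a$ in $\mathcal{P}$, $\ker M(a<x)=\ker M(a<y)$; (2) if $a<b$ and $c<d$ lie in the same line-component of $\mathcal{P}$ and $a,c\neq r$, then $\ker M(a<b)\cong\ker M(c<d)$; (3) if moreover $r$ has a unique successor $s$, then $\ker M(r<s)=\ker M(r<s')$ for every $s'>s$ that is not maximal in $\mathcal{P}$.
   Context: A poset is viewed as a category with a unique morphism $x\to y$ (written $x<y$ or $x\le y$) iff $x\le y$. A $k\mathcal{P}$-module is a functor to finite-dimensional $k$-vector spaces ($k$ a field). The composition length is the maximal length of a chain of covering relations $x_0\lessdot x_1\lessdot\cdots\lessdot x_m$. The Hasse diagram is a rooted tree with root $r$ means: $r$ is the unique minimal element and every $x\ne r$ has exactly one lower cover. A successor of $x$ is an upper cover of $x$. $\mathcal{G}^{\mathcal{P}}_1$ is the poset whose elements are the strict relations $a<b$ of $\mathcal{P}$ (written $[a<b]$), with $[a<b]\le[c<d]$ iff $[a<b]=[c<d]$ or $b\le c$; $\partial_0[a<b]=b$, $\partial_1[a<b]=a$, and $F^*M=M\circ F$. A set of strict relations is a line-component if it is the set of elements of a connected component of $\mathcal{G}^{\mathcal{P}}_1$. *)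

theory Defs
  imports Complex_Main
begin

(* Poset: a type of class order (the poset is UNIV).  k: a type of class field.
   A kP-module is given by a family of subspaces V x of an ambient k-vector space
   (ambient type 'v with scalar multiplication sc), together with linear maps
   F x y : V x -> V y for x <= y, satisfying functoriality. *)

definition covers :: "'p::order \<Rightarrow> 'p \<Rightarrow> bool" where
  "covers x y \<longleftrightarrow> x < y \<and> \<not> (\<exists>z. x < z \<and> z < y)"

definition comp_length_ge2 :: "'p::order itself \<Rightarrow> bool" where
  "comp_length_ge2 _ \<longleftrightarrow> (\<exists>x0 x1 x2 :: 'p. covers x0 x1 \<and> covers x1 x2)"

definition hasse_rooted_tree :: "'p::order \<Rightarrow> bool" where
  "hasse_rooted_tree r \<longleftrightarrow>
     (\<forall>x. (\<not> (\<exists>y. y < x)) \<longleftrightarrow> x = r) \<and>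
     (\<forall>x. x \<noteq> r \<longrightarrow> (\<exists>!y. covers y x))"

definition lin_map_on :: "('k::field \<Rightarrow> 'v::ab_group_add \<Rightarrow> 'v) \<Rightarrow> 'v set \<Rightarrow> 'v set \<Rightarrow> ('v \<Rightarrow> 'v) \<Rightarrow> bool" where
  "lin_map_on sc A B f \<longleftrightarrow> f ` A \<subseteq> B \<and>
     (\<forall>u\<in>A. \<forall>v\<in>A. f (u + v) = f u + f v) \<and>
     (\<forall>c. \<forall>u\<in>A. f (sc c u) = sc c (f u))"

definition lin_iso :: "('k::field \<Rightarrow> 'v::ab_group_add \<Rightarrow> 'v) \<Rightarrow> 'v set \<Rightarrow> 'v set \<Rightarrow> bool" where
  "lin_iso sc A B \<longleftrightarrow> (\<exists>g. lin_map_on sc A B g \<and> bij_betw g A B)"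

definition kP_module :: "('k::field \<Rightarrow> 'v::ab_group_add \<Rightarrow> 'v) \<Rightarrow> ('p::order \<Rightarrow> 'v set) \<Rightarrow> ('p \<Rightarrow> 'p \<Rightarrow> 'v \<Rightarrow> 'v) \<Rightarrow> bool" where
  "kP_module sc V F \<longleftrightarrow> vector_space sc \<and>
     (\<forall>x. module.subspace sc (V x) \<and> (\<exists>B. finite B \<and> B \<subseteq> V x \<and> module.span sc B = V x)) \<and>
     (\<forall>x y. x \<le> y \<longrightarrow> lin_map_on sc (V x) (V y) (F x y)) \<and>
     (\<forall>x. \<forall>v\<in>V x. F x x v = v) \<and>
     (\<forall>x y z. x \<le> y \<longrightarrow> y \<le> z \<longrightarrow> (\<forall>v\<in>V x. F y z (F x y v) = F x z v))"

definition kerM :: "('p::order \<Rightarrow> 'v::zero set) \<Rightarrow> ('p \<Rightarrow> 'p \<Rightarrow> 'v \<Rightarrow> 'v) \<Rightarrow> 'p \<Rightarrow> 'p \<Rightarrow> 'v set" where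
  "kerM V F x y = {v \<in> V x. F x y v = 0}"

(* partial_0^* M \<cong> partial_1^* M as kG_1-modules: a natural isomorphism phi
   with components phi_[a<b] : M(b) -> M(a), natural w.r.t. every morphism
   [a<b] <= [c<d] (i.e. b <= c) of G_1; identities are automatic. *)
definition pullback_iso :: "('k::field \<Rightarrow> 'v::ab_group_add \<Rightarrow> 'v) \<Rightarrow> ('p::order \<Rightarrow> 'v set) \<Rightarrow> ('p \<Rightarrow> 'p \<Rightarrow> 'v \<Rightarrow> 'v) \<Rightarrow> bool" where
  "pullback_iso sc V F \<longleftrightarrow> (\<exists>\<phi> :: 'p \<Rightarrow> 'p \<Rightarrow> 'v \<Rightarrow> 'v.
     (\<forall>a b. a < b \<longrightarrow> lin_map_on sc (V b) (V a) (\<phi> a b) \<and> bij_betw (\<phi> a b) (V b) (V a)) \<and>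
     (\<forall>a b c d. a < b \<longrightarrow> c < d \<longrightarrow> b \<le> c \<longrightarrow>
        (\<forall>v\<in>V b. \<phi> c d (F b d v) = F a c (\<phi> a b v))))"

(* comparability (= adjacency) of two distinct elements of G_1 *)
definition g1_adj :: "'p::order \<times> 'p \<Rightarrow> 'p \<times> 'p \<Rightarrow> bool" where
  "g1_adj p q \<longleftrightarrow> fst p < snd p \<and> fst q < snd q \<and> p \<noteq> q \<and>
     (snd p \<le> fst q \<or> snd q \<le> fst p)"

definition same_line_component :: "'p::order \<Rightarrow> 'p \<Rightarrow> 'p \<Rightarrow> 'p \<Rightarrow> bool" where
  "same_line_component a b c d \<longleftrightarrow> a < b \<and> c < d \<and> g1_adj\<^sup>*\<^sup>* (a, b) (c, d)"

end

theory Submission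
  imports Defs
begin

lemma kp_mod: "kP_module sc V F \<Longrightarrow> module sc"
  unfolding kP_module_def vector_space_def module_def by simp

lemma kp_sub: "kP_module sc V F \<Longrightarrow> module.subspace sc (V x)"
  unfolding kP_module_def by simp

lemma kp_zero: "kP_module sc V F \<Longrightarrow> 0 \<in> V x"
  using kp_sub[of sc V F x] by (simp add: module.subspace_def[OF kp_mod])

lemma kp_add: "kP_module sc V F \<Longrightarrow> u \<in> V x \<Longrightarrow> v \<in> V x \<Longrightarrow> u + v \<in> V x"
  using kp_sub[of sc V F x] by (simp add: module.subspace_def[OF kp_mod])

lemma kp_sc: "kP_module sc V F \<Longrightarrow> u \<in> V x \<Longrightarrow> sc c u \<in> V x"
  using kp_sub[of sc V F x] by (simp add: module.subspace_def[OF kp_mod])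

lemma kp_lin: "kP_module sc V F \<Longrightarrow> x \<le> y \<Longrightarrow> lin_map_on sc (V x) (V y) (F x y)"
  unfolding kP_module_def by simp

lemma lin0: "lin_map_on sc A B f \<Longrightarrow> 0 \<in> A \<Longrightarrow> f 0 = 0"
proof -
  assume l: "lin_map_on sc A B f" and z: "0 \<in> A"
  have "f (0 + 0) = f 0 + f 0" using l z unfolding lin_map_on_def by blast
  then show "f 0 = 0" by simp
qed

lemma ker_add: "kP_module sc V F \<Longrightarrow> x \<le> y \<Longrightarrow> u \<in> kerM V F x y \<Longrightarrow> v \<in> kerM V F x y
   \<Longrightarrow> u + v \<in> kerM V F x y"
proof -
  assume kp: "kP_module sc V F" and xy: "x \<le> y" and u: "u \<in> kerM V F x y" and v: "v \<in> kerM V F x y"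
  have uv: "u \<in> V x" "v \<in> V x" "F x y u = 0" "F x y v = 0" using u v unfolding kerM_def by auto
  have "F x y (u + v) = F x y u + F x y v" using kp_lin[OF kp xy] uv unfolding lin_map_on_def by blast
  then show ?thesis using uv kp_add[OF kp uv(1,2)] unfolding kerM_def by simp
qed

lemma ker_sc: "kP_module sc V F \<Longrightarrow> x \<le> y \<Longrightarrow> u \<in> kerM V F x y
   \<Longrightarrow> sc c u \<in> kerM V F x y"
proof -
  assume kp: "kP_module sc V F" and xy: "x \<le> y" and u: "u \<in> kerM V F x y"
  have uv: "u \<in> V x" "F x y u = 0" using u unfolding kerM_def by auto
  have "F x y (sc c u) = sc c (F x y u)" using kp_lin[OF kp xy] uv unfolding lin_map_on_def by blast
  then show ?thesis using uv kp_sc[OF kp uv(1)] module.scale_zero_right[OF kp_mod[OF kp]]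
    unfolding kerM_def by simp
qed

lemma lin_iso_refl: "lin_iso sc A A"
  unfolding lin_iso_def lin_map_on_def by (rule exI[of _ id]) auto

lemma lin_iso_eq: "A = B \<Longrightarrow> lin_iso sc A B"
  using lin_iso_refl by blast

lemma lin_iso_trans: "lin_iso sc A B \<Longrightarrow> lin_iso sc B C \<Longrightarrow> lin_iso sc A C"
proof -
  assume "lin_iso sc A B" "lin_iso sc B C"
  then obtain g h where g: "lin_map_on sc A B g" "bij_betw g A B"
    and h: "lin_map_on sc B C h" "bij_betw h B C" unfolding lin_iso_def by blast
  have "lin_map_on sc A C (h \<circ> g)" using g h unfolding lin_map_on_def
    by (auto simp: image_subset_iff)
  moreover have "bij_betw (h \<circ> g) A C" using g(2) h(2) by (rule bij_betw_trans)
  ultimately show ?thesis unfolding lin_iso_def by blast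
qed

lemma lin_iso_sym_gen:
  assumes "lin_iso sc A B" and cl1: "\<forall>u\<in>A. \<forall>v\<in>A. u + v \<in> A"
    and cl2: "\<forall>c. \<forall>u\<in>A. sc c u \<in> A"
  shows "lin_iso sc B A"
proof -
  obtain g where g: "lin_map_on sc A B g" "bij_betw g A B" using assms(1) unfolding lin_iso_def by blast
  define h where "h = inv_into A g"
  have hb: "bij_betw h B A" unfolding h_def using g(2) by (rule bij_betw_inv_into)
  have inj: "inj_on g A" using g(2) bij_betw_def by blast
  have gh: "\<And>u. u \<in> B \<Longrightarrow> g (h u) = u" unfolding h_def using g(2)
    by (simp add: bij_betw_inv_into_right)
  have hA: "\<And>u. u \<in> B \<Longrightarrow> h u \<in> A" using hb bij_betwE by blast
  have hg: "\<And>a. a \<in> A \<Longrightarrow> h (g a) = a" unfolding h_def using inj by simp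
  have "lin_map_on sc B A h" unfolding lin_map_on_def
  proof (intro conjI ballI allI)
    show "h ` B \<subseteq> A" using hA by blast
  next
    fix u v assume u: "u \<in> B" and v: "v \<in> B"
    have "g (h u + h v) = u + v" using g(1) hA[OF u] hA[OF v] gh[OF u] gh[OF v]
      unfolding lin_map_on_def by simp
    then have "h (u + v) = h (g (h u + h v))" by simp
    also have "\<dots> = h u + h v" using hg cl1 hA[OF u] hA[OF v] by simp
    finally show "h (u + v) = h u + h v" .
  next
    fix c u assume u: "u \<in> B"
    have "g (sc c (h u)) = sc c u" using g(1) hA[OF u] gh[OF u]
      unfolding lin_map_on_def by simp
    then have "h (sc c u) = h (g (sc c (h u)))" by simp
    also have "\<dots> = sc c (h u)" using hg cl2 hA[OF u] by simp
    finally show "h (sc c u) = sc c (h u)" .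
  qed
  then show ?thesis using hb unfolding lin_iso_def by blast
qed

lemma lin_iso_sym:
  "kP_module sc V F \<Longrightarrow> p \<le> q \<Longrightarrow> lin_iso sc (kerM V F p q) B \<Longrightarrow> lin_iso sc B (kerM V F p q)"
  by (rule lin_iso_sym_gen) (blast intro: ker_add[of sc V F p q] ker_sc[of sc V F p q])+

context
  fixes sc :: "'k::field \<Rightarrow> 'v::ab_group_add \<Rightarrow> 'v"
    and V :: "'p::order \<Rightarrow> 'v set"
    and F :: "'p \<Rightarrow> 'p \<Rightarrow> 'v \<Rightarrow> 'v"
    and \<phi> :: "'p \<Rightarrow> 'p \<Rightarrow> 'v \<Rightarrow> 'v"
  assumes kp: "kP_module sc V F"
    and phi1: "\<forall>a b. a < b \<longrightarrow> lin_map_on sc (V b) (V a) (\<phi> a b) \<and> bij_betw (\<phi> a b) (V b) (V a)"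
    and phi2: "\<forall>a b c d. a < b \<longrightarrow> c < d \<longrightarrow> b \<le> c \<longrightarrow>
        (\<forall>v\<in>V b. \<phi> c d (F b d v) = F a c (\<phi> a b v))"
begin

lemma KL:
  assumes "e < p" "p < q" "v \<in> V p"
  shows "F p q v = 0 \<longleftrightarrow> F e p (\<phi> e p v) = 0"
proof -
  have eq: "\<phi> p q (F p q v) = F e p (\<phi> e p v)" using phi2 assms by auto
  have Fv: "F p q v \<in> V q" using kp_lin[OF kp less_imp_le[OF assms(2)]] assms(3) unfolding lin_map_on_def by blast
  have z: "0 \<in> V q" using kp_zero[OF kp] .
  have l: "lin_map_on sc (V q) (V p) (\<phi> p q)" and b: "bij_betw (\<phi> p q) (V q) (V p)"
    using phi1 assms by auto
  have p0: "\<phi> p q 0 = 0" using lin0[OF l z] .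
  have inj: "inj_on (\<phi> p q) (V q)" using b bij_betw_def by blast
  have "F p q v = 0 \<longleftrightarrow> \<phi> p q (F p q v) = \<phi> p q 0"
    using inj Fv z by (simp add: inj_on_eq_iff)
  then show ?thesis using eq p0 by simp
qed

lemma part1:
  assumes "e < a" "a < x" "a < y"
  shows "kerM V F a x = kerM V F a y"
  unfolding kerM_def using KL[OF assms(1,2)] KL[OF assms(1,3)] by auto

lemma lemB:
  assumes "e < p" "p < q"
  shows "lin_iso sc (kerM V F p q) (kerM V F e p)"
proof -
  have l: "lin_map_on sc (V p) (V e) (\<phi> e p)" and b: "bij_betw (\<phi> e p) (V p) (V e)"
    using phi1 assms by auto
  have sub: "kerM V F p q \<subseteq> V p" unfolding kerM_def by auto
  have img: "\<phi> e p ` kerM V F p q = kerM V F e p"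
  proof
    show "\<phi> e p ` kerM V F p q \<subseteq> kerM V F e p"
      using KL[OF assms] b unfolding kerM_def bij_betw_def by auto
  next
    show "kerM V F e p \<subseteq> \<phi> e p ` kerM V F p q"
    proof
      fix w assume w: "w \<in> kerM V F e p"
      then have "w \<in> V e" unfolding kerM_def by auto
      then obtain v where v: "v \<in> V p" "w = \<phi> e p v" using b unfolding bij_betw_def by auto
      then have "v \<in> kerM V F p q" using KL[OF assms v(1)] w unfolding kerM_def by auto
      then show "w \<in> \<phi> e p ` kerM V F p q" using v by auto
    qed
  qed
  have "lin_map_on sc (kerM V F p q) (kerM V F e p) (\<phi> e p)"
    using l img sub unfolding lin_map_on_def by blast
  moreover have "bij_betw (\<phi> e p) (kerM V F p q) (kerM V F e p)"
    using img b sub unfolding bij_betw_def by (meson inj_on_subset)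
  ultimately show ?thesis unfolding lin_iso_def by blast
qed

lemma lemC:
  assumes "z < e" "e \<le> u" "u < q" "e < w"
  shows "lin_iso sc (kerM V F u q) (kerM V F e w)"
proof (cases "e = u")
  case True
  then show ?thesis using part1[OF assms(1), of q w] assms lin_iso_refl by simp
next
  case False
  then have "e < u" using assms by simp
  then have "lin_iso sc (kerM V F u q) (kerM V F e u)" using lemB assms by blast
  moreover have "kerM V F e u = kerM V F e w" using part1[OF assms(1) \<open>e < u\<close> assms(4)] .
  ultimately show ?thesis by simp
qed

end

theorem lemma4p5:
  fixes sc :: "'k::field \<Rightarrow> 'v::ab_group_add \<Rightarrow> 'v"
    and V :: "'p::order \<Rightarrow> 'v set"
    and F :: "'p \<Rightarrow> 'p \<Rightarrow> 'v \<Rightarrow> 'v"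
    and r :: 'p
  assumes "comp_length_ge2 TYPE('p)"
    and "hasse_rooted_tree r"
    and "kP_module sc V F"
    and "pullback_iso sc V F"
  shows "(\<forall>a x y. a \<noteq> r \<longrightarrow> a < x \<longrightarrow> a < y \<longrightarrow> kerM V F a x = kerM V F a y)
    \<and> (\<forall>a b c d. same_line_component a b c d \<longrightarrow> a \<noteq> r \<longrightarrow> c \<noteq> r \<longrightarrow>
          lin_iso sc (kerM V F a b) (kerM V F c d))
    \<and> (\<forall>s. (\<forall>t. covers r t \<longleftrightarrow> t = s) \<longrightarrow>
          (\<forall>s'. s < s' \<longrightarrow> (\<exists>z. s' < z) \<longrightarrow> kerM V F r s = kerM V F r s'))"
proof -
  have kp: "kP_module sc V F" by fact
  obtain \<phi> where phi1: "\<forall>a b. a < b \<longrightarrow> lin_map_on sc (V b) (V a) (\<phi> a b) \<and> bij_betw (\<phi> a b) (V b) (V a)"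
    and phi2: "\<forall>a b c d. a < b \<longrightarrow> c < d \<longrightarrow> b \<le> c \<longrightarrow>
        (\<forall>v\<in>V b. \<phi> c d (F b d v) = F a c (\<phi> a b v))"
    using assms(4) unfolding pullback_iso_def by (elim exE conjE)
  have H: "\<forall>x. (\<not> (\<exists>y. y < x)) \<longleftrightarrow> x = r" using assms(2) unfolding hasse_rooted_tree_def by (rule conjunct1)
  have below: "\<exists>e. e < a" if "a \<noteq> r" for a using spec[OF H, of a] that by simp
  have rmin: "\<And>z. \<not> z < r" using spec[OF H, of r] by simp
  have P1: "\<forall>a x y. a \<noteq> r \<longrightarrow> a < x \<longrightarrow> a < y \<longrightarrow> kerM V F a x = kerM V F a y"
  proof (intro allI impI)
    fix a x y assume "a \<noteq> r" "a < x" "a < y"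
    then obtain e where "e < a" using below by blast
    then show "kerM V F a x = kerM V F a y" using part1[OF kp phi1 phi2] \<open>a < x\<close> \<open>a < y\<close> by blast
  qed
  have P3: "\<forall>s. (\<forall>t. covers r t \<longleftrightarrow> t = s) \<longrightarrow>
          (\<forall>s'. s < s' \<longrightarrow> (\<exists>z. s' < z) \<longrightarrow> kerM V F r s = kerM V F r s')"
  proof (intro allI impI)
    fix s s' assume h: "\<forall>t. covers r t \<longleftrightarrow> t = s" and ss: "s < s'" and "\<exists>z. s' < z"
    then obtain z where z: "s' < z" by blast
    have rs: "r < s" using h unfolding covers_def by blast
    have sz: "s < z" using ss z by simp
    have A: "F s z v = 0 \<longleftrightarrow> F r s (\<phi> r s v) = 0" if "v \<in> V s" for v
      using KL[OF kp phi1 phi2 rs sz that] .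
    have B: "F s z v = 0 \<longleftrightarrow> F r s' (\<phi> r s v) = 0" if v: "v \<in> V s" for v
    proof -
      have eq: "\<phi> s' z (F s z v) = F r s' (\<phi> r s v)" using phi2 rs z ss v by auto
      have Fv: "F s z v \<in> V z" using kp_lin[OF kp less_imp_le[OF sz]] v unfolding lin_map_on_def by blast
      have zz: "0 \<in> V z" using kp_zero[OF kp] .
      have l: "lin_map_on sc (V z) (V s') (\<phi> s' z)" and b: "bij_betw (\<phi> s' z) (V z) (V s')"
        using phi1 z by auto
      have p0: "\<phi> s' z 0 = 0" using lin0[OF l zz] .
      have inj: "inj_on (\<phi> s' z) (V z)" using b bij_betw_def by blast
      have "F s z v = 0 \<longleftrightarrow> \<phi> s' z (F s z v) = \<phi> s' z 0"
        using inj Fv zz by (simp add: inj_on_eq_iff)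
      then show ?thesis using eq p0 by simp
    qed
    have b: "bij_betw (\<phi> r s) (V s) (V r)" using phi1 rs by auto
    show "kerM V F r s = kerM V F r s'"
    proof (rule set_eqI)
      fix w show "w \<in> kerM V F r s \<longleftrightarrow> w \<in> kerM V F r s'"
      proof (cases "w \<in> V r")
        case True
        then obtain v where v: "v \<in> V s" "w = \<phi> r s v" using b unfolding bij_betw_def by auto
        then show ?thesis using A[OF v(1)] B[OF v(1)] unfolding kerM_def by auto
      next
        case False
        then show ?thesis unfolding kerM_def by auto
      qed
    qed
  qed
  have P2: "\<forall>a b c d. same_line_component a b c d \<longrightarrow> a \<noteq> r \<longrightarrow> c \<noteq> r \<longrightarrow>
          lin_iso sc (kerM V F a b) (kerM V F c d)"
  proof (intro allI impI)
    fix a b c d assume sl: "same_line_component a b c d" and ar: "a \<noteq> r" and cr: "c \<noteq> r"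
    have ab: "a < b" and path: "g1_adj\<^sup>*\<^sup>* (a, b) (c, d)" using sl unfolding same_line_component_def by auto
    let ?K0 = "kerM V F a b"
    define Inv where "Inv = (\<lambda>(x::'p, y::'p). x < y \<and> (x \<noteq> r \<longrightarrow> lin_iso sc ?K0 (kerM V F x y)) \<and>
        (x = r \<longrightarrow> (\<forall>p q. y \<le> p \<longrightarrow> p < q \<longrightarrow> lin_iso sc ?K0 (kerM V F p q))))"
    have C: "\<And>e u q w. e \<noteq> r \<Longrightarrow> e \<le> u \<Longrightarrow> u < q \<Longrightarrow> e < w \<Longrightarrow> lin_iso sc (kerM V F u q) (kerM V F e w)"
      using lemC[OF kp phi1 phi2] below by blast
    have sym: "\<And>p q B. p < q \<Longrightarrow> lin_iso sc (kerM V F p q) B \<Longrightarrow> lin_iso sc B (kerM V F p q)"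
      using lin_iso_sym[OF kp] by (meson less_imp_le)
    have notle: "\<not> y \<le> r" if "x < y" for x y using rmin[of x] that less_le_trans by blast
    have "Inv (c, d)"
      using path
    proof (induction rule: rtranclp_induct)
      case base
      then show ?case unfolding Inv_def using ab ar lin_iso_refl by auto
    next
      case (step yy zz)
      obtain x y where yy: "yy = (x, y)" by force
      obtain x' y' where zz: "zz = (x', y')" by force
      have adj: "x < y" "x' < y'" "y \<le> x' \<or> y' \<le> x" using step(2) unfolding yy zz g1_adj_def by auto
      have I: "x \<noteq> r \<longrightarrow> lin_iso sc ?K0 (kerM V F x y)"
        "x = r \<longrightarrow> (\<forall>p q. y \<le> p \<longrightarrow> p < q \<longrightarrow> lin_iso sc ?K0 (kerM V F p q))"
        using step(3) unfolding yy Inv_def by auto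
      show ?case unfolding zz Inv_def
      proof (simp only: prod.case, intro conjI impI allI)
        show "x' < y'" by fact
      next
        assume x'r: "x' \<noteq> r"
        show "lin_iso sc ?K0 (kerM V F x' y')"
        proof (cases "x = r")
          case True
          then have "y \<le> x'" using adj notle by blast
          then show ?thesis using I(2) True adj by blast
        next
          case xr: False
          show ?thesis
          proof (cases "y \<le> x'")
            case True
            have "lin_iso sc (kerM V F x' y') (kerM V F x y)"
              using C[OF xr _ adj(2) adj(1)] True adj by simp
            then have "lin_iso sc (kerM V F x y) (kerM V F x' y')" using sym adj by blast
            then show ?thesis using I(1) xr lin_iso_trans by blast
          next
            case False
            then have "y' \<le> x" using adj by blast
            then have "lin_iso sc (kerM V F x y) (kerM V F x' y')"
              using C[OF x'r _ adj(1) adj(2)] adj(2) by simp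
            then show ?thesis using I(1) xr lin_iso_trans by blast
          qed
        qed
      next
        fix p q assume x'r: "x' = r" and yp: "y' \<le> p" and pq: "p < q"
        have xr: "x \<noteq> r" using adj x'r notle by blast
        have y'x: "y' \<le> x" using adj x'r notle by blast
        have y'r: "y' \<noteq> r" using adj x'r by blast
        have y'y: "y' < y" using y'x adj by simp
        have "lin_iso sc (kerM V F p q) (kerM V F y' y)" using C[OF y'r yp pq y'y] .
        then have i1: "lin_iso sc (kerM V F y' y) (kerM V F p q)" using sym pq by blast
        have i2: "lin_iso sc (kerM V F x y) (kerM V F y' y)" using C[OF y'r y'x adj(1) y'y] .
        show "lin_iso sc ?K0 (kerM V F p q)"
          using I(1) xr i1 i2 lin_iso_trans by blast
      qed
    qed
    then show "lin_iso sc ?K0 (kerM V F c d)" unfolding Inv_def using cr by auto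
  qed
  show ?thesis using P1 P2 P3 by blast
qed

end
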